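(* For every integer $r\geq 3$ and every positive integer $n$, every collection of $n$ matchings, each of size $\lceil \frac{(r+1)n}{2}\rceil$, in an $r$-uniform hypergraph contains a rainbow matching of size at least $n-2^r\sqrt{n}$.
   Context: A hypergraph is $r$-uniform if every edge contains exactly $r$ vertices. A matching is a set of pairwise vertex-disjoint edges. Given a collection (repetitions allowed) of matchings $M_1,\dots,M_n$ in a hypergraph, a matching $M\subseteq \bigcup_{i=1}^n M_i$ is rainbow if there is an injection $\phi:M\to[n]$ such that every edge $e\in M$ belongs to $M_{\phi(e)}$. *)

theory Defs
  imports Complex_Main
begin

definition uniform :: "nat \<Rightarrow> 'a set set \<Rightarrow> bool" where
  "uniform r H \<longleftrightarrow> (\<forall>e\<in>H. finite e \<and> card e = r)"

definition is_matching :: "'a set set \<Rightarrow> bool" where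
  "is_matching M \<longleftrightarrow> (\<forall>e\<in>M. \<forall>f\<in>M. e \<noteq> f \<longrightarrow> e \<inter> f = {})"

definition rainbow_matching :: "(nat \<Rightarrow> 'a set set) \<Rightarrow> nat \<Rightarrow> 'a set set \<Rightarrow> bool" where
  "rainbow_matching Ms n M \<longleftrightarrow> is_matching M \<and> M \<subseteq> (\<Union>i<n. Ms i) \<and>
     (\<exists>\<phi>. inj_on \<phi> M \<and> \<phi> ` M \<subseteq> {..<n} \<and> (\<forall>e\<in>M. e \<in> Ms (\<phi> e)))"

end

theory Submission imports Defs begin

lemma hit_bound:
  assumes "is_matching F" "finite e"
  shows "card {f\<in>F. f \<inter> e \<noteq> {}} \<le> card e"
proof -
  let ?S = "{f\<in>F. f \<inter> e \<noteq> {}}"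
  define g where "g f = (SOME v. v \<in> f \<inter> e)" for f
  have g: "g f \<in> f \<inter> e" if "f \<in> ?S" for f
    using that unfolding g_def by (metis (mono_tags, lifting) ex_in_conv mem_Collect_eq someI_ex)
  have "inj_on g ?S"
  proof (rule inj_onI)
    fix x y assume "x \<in> ?S" "y \<in> ?S" "g x = g y"
    then have "g x \<in> x \<inter> y" using g[of x] g[of y] by auto
    then have "x \<inter> y \<noteq> {}" by blast
    moreover have "x \<in> F" "y \<in> F" using \<open>x \<in> ?S\<close> \<open>y \<in> ?S\<close> by auto
    ultimately show "x = y" using assms(1) unfolding is_matching_def by blast
  qed
  moreover have "g ` ?S \<subseteq> e" using g by blast
  ultimately show ?thesis using card_inj_on_le assms(2) by blast
qed

lemma card_fam:
  assumes "finite W" "A \<subseteq> W" "B \<subseteq> W" "A \<inter> B = {}"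
  shows "card {X. X \<subseteq> W \<and> A \<subseteq> X \<and> X \<inter> B = {}} = 2 ^ (card W - card A - card B)"
proof -
  have "bij_betw (\<lambda>Y. Y \<union> A) (Pow (W - A - B)) {X. X \<subseteq> W \<and> A \<subseteq> X \<and> X \<inter> B = {}}"
  proof (rule bij_betw_imageI)
    show "inj_on (\<lambda>Y. Y \<union> A) (Pow (W - A - B))"
      by (rule inj_onI) blast
    show "(\<lambda>Y. Y \<union> A) ` Pow (W - A - B) = {X. X \<subseteq> W \<and> A \<subseteq> X \<and> X \<inter> B = {}}"
    proof
      show "(\<lambda>Y. Y \<union> A) ` Pow (W - A - B) \<subseteq> {X. X \<subseteq> W \<and> A \<subseteq> X \<and> X \<inter> B = {}}"
        using assms by blast
      show "{X. X \<subseteq> W \<and> A \<subseteq> X \<and> X \<inter> B = {}} \<subseteq> (\<lambda>Y. Y \<union> A) ` Pow (W - A - B)"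
      proof
        fix X assume X: "X \<in> {X. X \<subseteq> W \<and> A \<subseteq> X \<and> X \<inter> B = {}}"
        then have "X = (X - A) \<union> A" "X - A \<in> Pow (W - A - B)" by blast+
        then show "X \<in> (\<lambda>Y. Y \<union> A) ` Pow (W - A - B)" by blast
      qed
    qed
  qed
  then have "card {X. X \<subseteq> W \<and> A \<subseteq> X \<and> X \<inter> B = {}} = card (Pow (W - A - B))"
    by (simp add: bij_betw_same_card)
  also have "\<dots> = 2 ^ card (W - A - B)" using assms by (simp add: card_Pow)
  also have "card (W - A - B) = card W - card A - card B"
  proof -
    have "card (W - A - B) = card (W - A) - card B"
      using assms by (subst card_Diff_subset) (auto intro: finite_subset)
    moreover have "card (W - A) = card W - card A"
      using assms by (subst card_Diff_subset) (auto intro: finite_subset)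
    ultimately show ?thesis by simp
  qed
  finally show ?thesis .
qed

lemma bollobas:
  assumes "finite I" "\<And>i. i \<in> I \<Longrightarrow> finite (A i) \<and> finite (B i) \<and> card (A i) = r \<and> card (B i) = r \<and> A i \<inter> B i = {}"
    and "\<And>i j. i \<in> I \<Longrightarrow> j \<in> I \<Longrightarrow> i \<noteq> j \<Longrightarrow> A i \<inter> B j \<noteq> {}"
  shows "card I \<le> 4 ^ r"
proof (cases "I = {}")
  case True then show ?thesis by simp
next
  case False
  then obtain i0 where i0: "i0 \<in> I" by blast
  define W where "W = (\<Union>i\<in>I. A i \<union> B i)"
  have fW: "finite W" unfolding W_def using assms by auto
  define F where "F i = {X. X \<subseteq> W \<and> A i \<subseteq> X \<and> X \<inter> B i = {}}" for i
  have cF: "card (F i) = 2 ^ (card W - 2 * r)" if "i \<in> I" for i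
  proof -
    have s: "A i \<subseteq> W" "B i \<subseteq> W" using that unfolding W_def by blast+
    have "card (F i) = 2 ^ (card W - card (A i) - card (B i))"
      unfolding F_def using card_fam[OF fW s] assms(2)[OF that] by blast
    then show ?thesis using assms(2)[OF that] by (simp add: mult_2)
  qed
  have disj: "F i \<inter> F j = {}" if "i \<in> I" "j \<in> I" "i \<noteq> j" for i j
    using assms(3)[OF that] unfolding F_def by blast
  have "card (\<Union>(F ` I)) = (\<Sum>i\<in>I. card (F i))"
  proof (rule card_UN_disjoint)
    show "finite I" by fact
    show "\<forall>i\<in>I. finite (F i)" unfolding F_def using fW by (auto intro: finite_subset[of _ "Pow W"])
    show "\<forall>i\<in>I. \<forall>j\<in>I. i \<noteq> j \<longrightarrow> F i \<inter> F j = {}" using disj by blast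
  qed
  also have "\<dots> = card I * 2 ^ (card W - 2 * r)" using cF by simp
  finally have eq: "card (\<Union>(F ` I)) = card I * 2 ^ (card W - 2 * r)" .
  have "\<Union>(F ` I) \<subseteq> Pow W" unfolding F_def by blast
  then have "card (\<Union>(F ` I)) \<le> 2 ^ card W"
    using fW by (metis card_Pow card_mono finite_Pow_iff)
  moreover have "2 * r \<le> card W"
  proof -
    have "A i0 \<union> B i0 \<subseteq> W" using i0 unfolding W_def by blast
    then have "card (A i0 \<union> B i0) \<le> card W" using fW by (simp add: card_mono)
    moreover have "card (A i0 \<union> B i0) = 2 * r" using assms(2)[OF i0] by (simp add: card_Un_disjoint)
    ultimately show ?thesis by simp
  qed
  then have "(2::nat) ^ card W = 2 ^ (card W - 2 * r) * 4 ^ r"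
  proof -
    have "(2::nat) ^ card W = 2 ^ (card W - 2 * r) * 2 ^ (2 * r)"
      using \<open>2 * r \<le> card W\<close> by (metis le_add_diff_inverse2 power_add)
    moreover have "(2::nat) ^ (2 * r) = 4 ^ r" by (simp add: power_mult)
    ultimately show ?thesis by simp
  qed
  ultimately have "card I * 2 ^ (card W - 2 * r) \<le> 4 ^ r * 2 ^ (card W - 2 * r)"
    using eq by (simp add: mult.commute)
  then show ?thesis by simp
qed

lemma card_filter_sum:
  assumes "finite A"
  shows "card {x\<in>A. P x} = (\<Sum>x\<in>A. if P x then 1 else 0::nat)"
  using assms by (simp add: sum.inter_filter[symmetric])

theorem lemma2p6:
  fixes r n :: nat and H :: "'a set set" and Ms :: "nat \<Rightarrow> 'a set set"
  assumes "r \<ge> 3" and "n \<ge> 1"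
    and "uniform r H"
    and "\<And>i. i < n \<Longrightarrow> Ms i \<subseteq> H \<and> is_matching (Ms i)"
    and "\<And>i. i < n \<Longrightarrow> finite (Ms i) \<and> int (card (Ms i)) = \<lceil>real ((r + 1) * n) / 2\<rceil>"
  shows "\<exists>M. rainbow_matching Ms n M \<and> finite M \<and>
           real (card M) \<ge> real n - 2 ^ r * sqrt (real n)"
proof -
  have edge: "finite f \<and> card f = r" if "i < n" "f \<in> Ms i" for i f
    using assms(3,4) that unfolding uniform_def by blast
  have edge_ne: "f \<noteq> {}" if "i < n" "f \<in> Ms i" for i f
    using edge[OF that] assms(1) by auto
  have mat: "is_matching (Ms i)" if "i < n" for i using assms(4) that by blast
  have finMs: "finite (Ms i)" if "i < n" for i using assms(5) that by blast
  have sizeMs: "(r+1)*n \<le> 2 * card (Ms i)" if "i < n" for i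
  proof -
    have "real ((r + 1) * n) / 2 \<le> real (card (Ms i))"
      using assms(5)[OF that] by (metis le_of_int_ceiling of_int_of_nat_eq)
    then show ?thesis by linarith
  qed
  define RM where "RM = {M. rainbow_matching Ms n M \<and> finite M}"
  have cardRM: "card M < Suc n" if Min: "M \<in> RM" for M
  proof -
    obtain \<phi> where "inj_on \<phi> M" "\<phi> ` M \<subseteq> {..<n}"
      using Min unfolding RM_def rainbow_matching_def by blast
    then have "card M \<le> card {..<n}" using card_inj_on_le by blast
    then show ?thesis by simp
  qed
  have "{} \<in> RM" unfolding RM_def rainbow_matching_def is_matching_def by auto
  then obtain M where M: "M \<in> RM" and Mmax: "\<And>M'. M' \<in> RM \<Longrightarrow> card M' \<le> card M"
    using ex_has_greatest_nat[of "\<lambda>M. M \<in> RM" "{}" card "Suc n"] cardRM by blast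
  have finM: "finite M" and matM: "is_matching M" and subM: "M \<subseteq> (\<Union>i<n. Ms i)"
    using M unfolding RM_def rainbow_matching_def by auto
  obtain \<phi> where inj: "inj_on \<phi> M" and rng: "\<phi> ` M \<subseteq> {..<n}" and col: "\<And>e. e \<in> M \<Longrightarrow> e \<in> Ms (\<phi> e)"
    using M unfolding RM_def rainbow_matching_def by blast
  define m where "m = card M"
  define U where "U = {..<n} - \<phi> ` M"
  define k where "k = n - m"
  have mn: "m \<le> n" using cardRM[OF M] unfolding m_def by simp
  have cardU: "card U = k"
  proof -
    have "card (\<phi> ` M) = m" using inj unfolding m_def by (simp add: card_image)
    then show ?thesis unfolding U_def k_def using rng by (simp add: card_Diff_subset finM)
  qed
  have finU: "finite U" unfolding U_def by simp
  have Un: "c < n" if "c \<in> U" for c using that unfolding U_def by simp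
  have eM: "finite e \<and> card e = r \<and> e \<noteq> {}" if "e \<in> M" for e
    using edge[of "\<phi> e" e] edge_ne[of "\<phi> e" e] rng col[OF that] that by auto
  define D where "D f = {e\<in>M. f \<inter> e \<noteq> {}}" for f
  define Ps where "Ps c = {f\<in>Ms c. card (D f) = 1}" for c
  define Pe where "Pe c e = {f\<in>Ms c. D f = {e}}" for c e
  have finD: "finite (D f)" for f unfolding D_def using finM by simp
  have phiU: "\<phi> e \<notin> U" if "e \<in> M" for e using that unfolding U_def by blast
  have hit: "D f \<noteq> {}" if cU: "c \<in> U" and fc: "f \<in> Ms c" for c f
  proof
    assume D0: "D f = {}"
    have disj: "f \<inter> e = {}" if "e \<in> M" for e using D0 that unfolding D_def by blast
    have fne: "f \<noteq> {}" using edge_ne[OF Un[OF cU] fc] .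
    have fnM: "f \<notin> M" using disj fne by blast
    define \<psi> where "\<psi> = \<phi>(f := c)"
    have psiM: "\<psi> e = \<phi> e" if "e \<in> M" for e using that fnM unfolding \<psi>_def by auto
    have "rainbow_matching Ms n (insert f M)"
      unfolding rainbow_matching_def
    proof (intro conjI exI[of _ \<psi>])
      show "is_matching (insert f M)"
        using matM disj unfolding is_matching_def by blast
      show "insert f M \<subseteq> (\<Union>i<n. Ms i)" using subM fc Un[OF cU] by blast
      have "inj_on \<psi> M" using inj psiM by (metis inj_on_cong)
      moreover have "\<psi> f \<notin> \<psi> ` M" using psiM cU unfolding \<psi>_def U_def by auto
      ultimately show "inj_on \<psi> (insert f M)" using fnM by simp
      show "\<psi> ` insert f M \<subseteq> {..<n}" using rng psiM Un[OF cU] unfolding \<psi>_def by auto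
      show "\<forall>e\<in>insert f M. e \<in> Ms (\<psi> e)" using col psiM fc unfolding \<psi>_def by auto
    qed
    then have "insert f M \<in> RM" unfolding RM_def using finM by simp
    then have "card (insert f M) \<le> card M" using Mmax by blast
    then show False using fnM finM by simp
  qed
  have degsum: "(\<Sum>f\<in>Ms c. card (D f)) \<le> r * m" if cU: "c \<in> U" for c
  proof -
    have fin: "finite (Ms c)" using finMs[OF Un[OF cU]] .
    have "(\<Sum>f\<in>Ms c. card (D f)) = (\<Sum>f\<in>Ms c. \<Sum>e\<in>M. if f \<inter> e \<noteq> {} then 1 else 0)"
      unfolding D_def using finM by (simp add: card_filter_sum)
    also have "\<dots> = (\<Sum>e\<in>M. \<Sum>f\<in>Ms c. if f \<inter> e \<noteq> {} then 1 else 0)"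
      by (rule sum.swap)
    also have "\<dots> = (\<Sum>e\<in>M. card {f\<in>Ms c. f \<inter> e \<noteq> {}})"
      using fin by (simp add: card_filter_sum)
    also have "\<dots> \<le> (\<Sum>e\<in>M. r)"
    proof (rule sum_mono)
      fix e assume "e \<in> M"
      then show "card {f\<in>Ms c. f \<inter> e \<noteq> {}} \<le> r"
        using hit_bound[OF mat[OF Un[OF cU]], of e] eM by auto
    qed
    also have "\<dots> = r * m" unfolding m_def by simp
    finally show ?thesis .
  qed
  have privbound: "(r+1)*n \<le> card (Ps c) + r * m" if cU: "c \<in> U" for c
  proof -
    have fin: "finite (Ms c)" using finMs[OF Un[OF cU]] .
    have "(\<Sum>f\<in>Ms c. if f \<in> Ps c then 1 else 2) \<le> (\<Sum>f\<in>Ms c. card (D f))"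
    proof (rule sum_mono)
      fix f assume fc: "f \<in> Ms c"
      have "card (D f) \<noteq> 0" using hit[OF cU fc] finD by simp
      moreover have "f \<notin> Ps c \<Longrightarrow> card (D f) \<noteq> 1" unfolding Ps_def using fc by simp
      ultimately show "(if f \<in> Ps c then 1 else 2) \<le> card (D f)" by auto
    qed
    moreover have "(\<Sum>f\<in>Ms c. if f \<in> Ps c then 1 else 2) + card (Ps c) = 2 * card (Ms c)"
    proof -
      have "card (Ps c) = (\<Sum>f\<in>Ms c. if f \<in> Ps c then 1 else 0)"
        using card_filter_sum[OF fin, of "\<lambda>f. f \<in> Ps c"] unfolding Ps_def by simp
      then have "(\<Sum>f\<in>Ms c. if f \<in> Ps c then 1 else 2) + card (Ps c)
          = (\<Sum>f\<in>Ms c. (if f \<in> Ps c then 1 else 2) + (if f \<in> Ps c then 1 else 0))"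
        by (simp add: sum.distrib)
      also have "\<dots> = (\<Sum>f\<in>Ms c. 2)" by (rule sum.cong) auto
      finally show ?thesis by simp
    qed
    ultimately show ?thesis using degsum[OF cU] sizeMs[OF Un[OF cU]] by linarith
  qed
  have Psplit: "card (Ps c) = (\<Sum>e\<in>M. card (Pe c e))" if cU: "c \<in> U" for c
  proof -
    have fin: "finite (Ms c)" using finMs[OF Un[OF cU]] .
    have "Ps c = (\<Union>e\<in>M. Pe c e)"
    proof
      show "Ps c \<subseteq> (\<Union>e\<in>M. Pe c e)"
      proof
        fix f assume "f \<in> Ps c"
        then obtain e where "D f = {e}" "f \<in> Ms c" unfolding Ps_def by (auto simp: card_1_singleton_iff)
        moreover then have "e \<in> M" unfolding D_def by blast
        ultimately show "f \<in> (\<Union>e\<in>M. Pe c e)" unfolding Pe_def by blast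
      qed
      show "(\<Union>e\<in>M. Pe c e) \<subseteq> Ps c" unfolding Pe_def Ps_def by auto
    qed
    moreover have "card (\<Union>e\<in>M. Pe c e) = (\<Sum>e\<in>M. card (Pe c e))"
    proof (rule card_UN_disjoint)
      show "finite M" by fact
      show "\<forall>e\<in>M. finite (Pe c e)" unfolding Pe_def using fin by simp
      show "\<forall>e\<in>M. \<forall>e'\<in>M. e \<noteq> e' \<longrightarrow> Pe c e \<inter> Pe c e' = {}" unfolding Pe_def by auto
    qed
    ultimately show ?thesis by simp
  qed
  have cross: "f \<inter> f' \<noteq> {}"
    if cU: "c \<in> U" and c'U: "c' \<in> U" and cc: "c \<noteq> c'" and eMM: "e \<in> M"
      and fP: "f \<in> Pe c e" and f'P: "f' \<in> Pe c' e" for c c' e f f'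
  proof
    assume ff: "f \<inter> f' = {}"
    have fc: "f \<in> Ms c" and Df: "D f = {e}" using fP unfolding Pe_def by auto
    have f'c: "f' \<in> Ms c'" and Df': "D f' = {e}" using f'P unfolding Pe_def by auto
    have fne: "f \<noteq> {}" using edge_ne[OF Un[OF cU] fc] .
    have f'ne: "f' \<noteq> {}" using edge_ne[OF Un[OF c'U] f'c] .
    have fg: "f \<inter> g = {}" if "g \<in> M" "g \<noteq> e" for g
      using Df that unfolding D_def by blast
    have f'g: "f' \<inter> g = {}" if "g \<in> M" "g \<noteq> e" for g
      using Df' that unfolding D_def by blast
    have fnM: "f \<notin> M - {e}" using fg fne by blast
    have f'nM: "f' \<notin> M - {e}" using f'g f'ne by blast
    have fnf': "f \<noteq> f'" using ff fne by blast
    define M' where "M' = insert f (insert f' (M - {e}))"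
    define \<psi> where "\<psi> = \<phi>(f := c, f' := c')"
    have psiM: "\<psi> g = \<phi> g" if "g \<in> M - {e}" for g using that fnM f'nM unfolding \<psi>_def by auto
    have psif: "\<psi> f = c" "\<psi> f' = c'" unfolding \<psi>_def using fnf' by auto
    have "rainbow_matching Ms n M'"
      unfolding rainbow_matching_def
    proof (intro conjI exI[of _ \<psi>])
      show "is_matching M'"
        unfolding is_matching_def M'_def
      proof (intro ballI impI)
        fix g h assume g: "g \<in> insert f (insert f' (M - {e}))" and h: "h \<in> insert f (insert f' (M - {e}))"
          and gh: "g \<noteq> h"
        have mM: "g \<inter> h = {}" if "g \<in> M" "h \<in> M" "g \<noteq> h" for g h
          using matM that unfolding is_matching_def by blast
        have ff2: "f' \<inter> f = {}" using ff by blast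
        have fg2: "g \<inter> f = {}" if "g \<in> M" "g \<noteq> e" for g using fg[OF that] by blast
        have f'g2: "g \<inter> f' = {}" if "g \<in> M" "g \<noteq> e" for g using f'g[OF that] by blast
        from g h gh show "g \<inter> h = {}"
          by (elim insertE DiffE; simp add: ff ff2 fg fg2 f'g f'g2 mM)
      qed
      show "M' \<subseteq> (\<Union>i<n. Ms i)" using subM fc f'c Un[OF cU] Un[OF c'U] unfolding M'_def by blast
      have "inj_on \<phi> (M - {e})" using inj by (rule inj_on_diff)
      then have "inj_on \<psi> (M - {e})" using inj_on_cong[of "M - {e}" \<psi> \<phi>] psiM by simp
      moreover have "\<psi> f \<notin> \<psi> ` (insert f' (M - {e}))" using psiM psif cU cc unfolding U_def by auto
      moreover have "\<psi> f' \<notin> \<psi> ` (M - {e})" using psiM psif c'U unfolding U_def by auto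
      ultimately show "inj_on \<psi> M'" using fnM f'nM fnf' unfolding M'_def by simp
      show "\<psi> ` M' \<subseteq> {..<n}" using rng psiM psif Un[OF cU] Un[OF c'U] unfolding M'_def by auto
      show "\<forall>g\<in>M'. g \<in> Ms (\<psi> g)" using col psiM psif fc f'c unfolding M'_def by auto
    qed
    moreover have "finite M'" unfolding M'_def using finM by simp
    ultimately have "M' \<in> RM" unfolding RM_def by simp
    then have "card M' \<le> card M" using Mmax by blast
    moreover have "card M' = card M + 1"
    proof -
      have "card (M - {e}) = card M - 1" using eMM finM by simp
      moreover have "card M \<ge> 1" using eMM finM by (metis One_nat_def Suc_leI card_gt_0_iff empty_iff)
      ultimately show ?thesis unfolding M'_def using fnM f'nM fnf' finM by simp
    qed
    ultimately show False by simp
  qed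
  have edgebound: "(\<Sum>c\<in>U. card (Pe c e)) \<le> k + (r - 1) * 4 ^ r" if eMM: "e \<in> M" for e
  proof -
    define Big where "Big = {c\<in>U. 2 \<le> card (Pe c e)}"
    have finBig: "finite Big" unfolding Big_def using finU by simp
    have Pe_le: "card (Pe c e) \<le> r" if cU: "c \<in> U" for c
    proof -
      have "Pe c e \<subseteq> {f\<in>Ms c. f \<inter> e \<noteq> {}}" unfolding Pe_def D_def by blast
      moreover have "card {f\<in>Ms c. f \<inter> e \<noteq> {}} \<le> r"
        using hit_bound[OF mat[OF Un[OF cU]], of e] eM[OF eMM] by auto
      moreover have "finite {f\<in>Ms c. f \<inter> e \<noteq> {}}" using finMs[OF Un[OF cU]] by simp
      ultimately show ?thesis by (meson card_mono le_trans)
    qed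
    have "(\<Sum>c\<in>U. card (Pe c e)) \<le> (\<Sum>c\<in>U. 1 + (if c \<in> Big then r - 1 else 0))"
    proof (rule sum_mono)
      fix c assume cU: "c \<in> U"
      show "card (Pe c e) \<le> 1 + (if c \<in> Big then r - 1 else 0)"
        using Pe_le[OF cU] cU unfolding Big_def by auto
    qed
    also have "\<dots> = k + (r - 1) * card Big"
    proof -
      have "(\<Sum>c\<in>U. (if c \<in> Big then r - 1 else 0)) = (r - 1) * card Big"
      proof -
        have "Big = {c\<in>U. c \<in> Big}" unfolding Big_def by auto
        then have "card Big = (\<Sum>c\<in>U. if c \<in> Big then 1 else 0)"
          using card_filter_sum[OF finU, of "\<lambda>c. c \<in> Big"] by simp
        then have "(r - 1) * card Big = (\<Sum>c\<in>U. (r - 1) * (if c \<in> Big then 1 else 0))"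
          by (simp add: sum_distrib_left)
        also have "\<dots> = (\<Sum>c\<in>U. (if c \<in> Big then r - 1 else 0))"
          by (rule sum.cong) auto
        finally show ?thesis by simp
      qed
      moreover have "(\<Sum>c\<in>U. 1 + (if c \<in> Big then r - 1 else 0)) =
          (\<Sum>c\<in>U. 1) + (\<Sum>c\<in>U. (if c \<in> Big then r - 1 else 0))"
        by (rule sum.distrib)
      ultimately show ?thesis using cardU by simp
    qed
    also have "card Big \<le> 4 ^ r"
    proof -
      have "\<forall>c\<in>Big. \<exists>p. fst p \<in> Pe c e \<and> snd p \<in> Pe c e \<and> fst p \<noteq> snd p"
      proof
        fix c assume "c \<in> Big"
        then have "2 \<le> card (Pe c e)" unfolding Big_def by simp
        then obtain x y where "x \<in> Pe c e" "y \<in> Pe c e" "x \<noteq> y"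
          by (metis One_nat_def card.infinite card_le_Suc0_iff_eq not_less_eq_eq numeral_2_eq_2 zero_le)
        then show "\<exists>p. fst p \<in> Pe c e \<and> snd p \<in> Pe c e \<and> fst p \<noteq> snd p"
          by (intro exI[of _ "(x, y)"]) simp
      qed
      then obtain p where p: "\<And>c. c \<in> Big \<Longrightarrow> fst (p c) \<in> Pe c e \<and> snd (p c) \<in> Pe c e \<and> fst (p c) \<noteq> snd (p c)"
        by metis
      show ?thesis
      proof (rule bollobas[of Big "\<lambda>c. fst (p c)" "\<lambda>c. snd (p c)"])
        show "finite Big" by fact
        fix c assume cB: "c \<in> Big"
        then have cU: "c \<in> U" unfolding Big_def by simp
        have in1: "fst (p c) \<in> Ms c" and in2: "snd (p c) \<in> Ms c" using p[OF cB] unfolding Pe_def by auto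
        show "finite (fst (p c)) \<and> finite (snd (p c)) \<and> card (fst (p c)) = r \<and> card (snd (p c)) = r \<and>
              fst (p c) \<inter> snd (p c) = {}"
          using edge[OF Un[OF cU] in1] edge[OF Un[OF cU] in2] mat[OF Un[OF cU]] p[OF cB] in1 in2
          unfolding is_matching_def by blast
      next
        fix c c' assume cB: "c \<in> Big" and c'B: "c' \<in> Big" and cc: "c \<noteq> c'"
        show "fst (p c) \<inter> snd (p c') \<noteq> {}"
          using cross[of c c' e "fst (p c)" "snd (p c')"] cB c'B cc p[OF cB] p[OF c'B] eMM
          unfolding Big_def by blast
      qed
    qed
    then have "k + (r - 1) * card Big \<le> k + (r - 1) * 4 ^ r" by simp
    finally show ?thesis .
  qed
  have upper: "(\<Sum>c\<in>U. card (Ps c)) \<le> m * (k + (r - 1) * 4 ^ r)"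
  proof -
    have "(\<Sum>c\<in>U. card (Ps c)) = (\<Sum>c\<in>U. \<Sum>e\<in>M. card (Pe c e))"
      using Psplit by (rule sum.cong[OF refl])
    also have "\<dots> = (\<Sum>e\<in>M. \<Sum>c\<in>U. card (Pe c e))" by (rule sum.swap)
    also have "\<dots> \<le> (\<Sum>e\<in>M. k + (r - 1) * 4 ^ r)" using edgebound by (rule sum_mono)
    also have "\<dots> = m * (k + (r - 1) * 4 ^ r)" unfolding m_def by simp
    finally show ?thesis .
  qed
  have lower: "k * ((r+1)*n) \<le> (\<Sum>c\<in>U. card (Ps c)) + k * (r * m)"
  proof -
    have "(\<Sum>c\<in>U. (r+1)*n) \<le> (\<Sum>c\<in>U. card (Ps c) + r * m)"
      using privbound by (rule sum_mono)
    then show ?thesis using cardU by (simp add: sum.distrib)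
  qed
  have nmk: "n = m + k" unfolding k_def using mn by simp
  have key: "(r+1) * (k * k) \<le> (r+1) * (n * 4 ^ r)"
  proof -
    have A: "k * ((r+1)*n) = k * (r * m) + k * m + (r+1) * (k * k)"
      unfolding nmk by (simp add: algebra_simps)
    have B: "m * (k + (r - 1) * 4 ^ r) = k * m + m * ((r - 1) * 4 ^ r)"
      by (simp add: algebra_simps)
    have C: "(r+1) * (k * k) \<le> m * ((r - 1) * 4 ^ r)"
      using lower upper A B by linarith
    have "m * ((r - 1) * 4 ^ r) \<le> n * ((r + 1) * 4 ^ r)"
      using mn by (intro mult_le_mono) auto
    then show ?thesis using C by (simp add: algebra_simps)
  qed
  then have kk: "k * k \<le> n * 4 ^ r" using mult_le_cancel1[of "r+1" "k * k" "n * 4 ^ r"] by simp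
  have "real k \<le> 2 ^ r * sqrt (real n)"
  proof -
    have "real k * real k \<le> real n * 4 ^ r" using kk by (metis of_nat_le_iff of_nat_mult of_nat_numeral of_nat_power)
    then have "sqrt (real k * real k) \<le> sqrt (real n * 4 ^ r)" by (rule real_sqrt_le_mono)
    moreover have "sqrt (real k * real k) = real k" by simp
    moreover have "sqrt (real n * 4 ^ r) = sqrt (real n) * 2 ^ r"
      by (simp add: real_sqrt_mult power_mult[symmetric] real_sqrt_power)
    ultimately show ?thesis by (simp add: mult.commute)
  qed
  moreover have "rainbow_matching Ms n M" using M unfolding RM_def by simp
  ultimately show ?thesis using finM nmk unfolding m_def by (intro exI[of _ M]) auto
qed

end
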